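(* For all disjoint subsets $X_i, X_j \subseteq A$: if $X_i \leadsto X_j$, then for every $S' \subseteq S$, $$\Psi_{X_i \cup X_j}(S') = (\Psi_{X_i} \oslash \Psi_{X_j})\big(\Omega_{X_i \cup X_j}(S')\big).$$
   Context: Let $A$ be a finite set of agents. For each $a \in A$ let $S_a$ be a nonempty finite set, and $S = \prod_{a \in A} S_a$ the set of states. For each $a \in A$ let $\to_a \subseteq S \times S$ be a relation that is either empty or left-total, such that whenever $s \to_a s'$, either $s = s'$ or $s$ and $s'$ differ only in the $a$-component. For $X \subseteq A$ let $\to_X = \bigcup_{a \in X} \to_a$ and $\to_X^*$ its reflexive-transitive closure; for $T \subseteq S$, $(T \to_X) = \{ t' : \exists t \in T,\ t \to_X t'\}$. Orbit operator: $\Omega_X(S') = \{ s' : \exists s \in S',\ s \to_X^* s'\}$. Equilibria operator: $\Psi_X(S') = \{ s \in \Omega_X(S') : \forall s' \in S,\ s \to_X^* s' \implies s' \to_X^* s \}$. $M$-relation: $X \leadsto Y$ iff for every $S' \subseteq S$, with $T = \Psi_X(\Psi_{X \cup Y}(S'))$, one has $(T \to_Y) \subseteq T$. Composition operator: for $X, Y \subseteq A$, let $\rightleftharpoons_X$ be the equivalence relation on $S$ given by $s \rightleftharpoons_X s'$ iff $s \to_X^* s'$ and $s' \to_X^* s$; $[s]_X$ denotes the class of $s$ and $[S']_X = \{[s]_X : s \in S'\}$. On classes define $c \Rightarrow_Y c'$ iff there exist $s \in c$, $s' \in c'$ with $s \to_Y s'$, and let $\Rightarrow_Y^*$ be its reflexive-transitive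 closure. For $S'' \subseteq S$ let $[\widetilde{\Psi}_Y]_X(S'') = \{ e \in [S'']_X : \{e' : e \Rightarrow_Y^* e'\} \subseteq [S'']_X \text{ and } \forall e' \in [S]_X,\ e \Rightarrow_Y^* e' \implies e' \Rightarrow_Y^* e \}$, and for a set $E$ of subsets of $S$ let $\mathsf{Flatten}(E) = \bigcup_{e \in E} e$. Then $(\Psi_X \oslash \Psi_Y)(S'') = \mathsf{Flatten}\big([\widetilde{\Psi}_Y]_X(\Psi_X(S''))\big)$. *)

theory Defs
  imports "HOL-Library.FuncSet"
begin

text \<open>States are functions from agents to local values; the state space is
  S = PiE A Sa. R a is the transition relation of agent a.\<close>

definition steps :: "('a \<Rightarrow> ('s \<times> 's) set) \<Rightarrow> 'a set \<Rightarrow> ('s \<times> 's) set" where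
  "steps R X = (\<Union>a\<in>X. R a)"

definition reach :: "('a \<Rightarrow> ('s \<times> 's) set) \<Rightarrow> 'a set \<Rightarrow> ('s \<times> 's) set" where
  "reach R X = (steps R X)\<^sup>*"

definition post :: "('a \<Rightarrow> ('s \<times> 's) set) \<Rightarrow> 'a set \<Rightarrow> 's set \<Rightarrow> 's set" where
  "post R X T = {t'. \<exists>t\<in>T. (t, t') \<in> steps R X}"

definition Omega :: "('a \<Rightarrow> ('s \<times> 's) set) \<Rightarrow> 'a set \<Rightarrow> 's set \<Rightarrow> 's set" where
  "Omega R X S' = {s'. \<exists>s\<in>S'. (s, s') \<in> reach R X}"

definition Psi :: "'s set \<Rightarrow> ('a \<Rightarrow> ('s \<times> 's) set) \<Rightarrow> 'a set \<Rightarrow> 's set \<Rightarrow> 's set" where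
  "Psi S R X S' = {s \<in> Omega R X S'. \<forall>s'\<in>S. (s, s') \<in> reach R X \<longrightarrow> (s', s) \<in> reach R X}"

definition Mrel :: "'s set \<Rightarrow> ('a \<Rightarrow> ('s \<times> 's) set) \<Rightarrow> 'a set \<Rightarrow> 'a set \<Rightarrow> bool" where
  "Mrel S R X Y = (\<forall>S'. S' \<subseteq> S \<longrightarrow>
      (let T = Psi S R X (Psi S R (X \<union> Y) S') in post R Y T \<subseteq> T))"

definition cls :: "('a \<Rightarrow> ('s \<times> 's) set) \<Rightarrow> 'a set \<Rightarrow> 's \<Rightarrow> 's set" where
  "cls R X s = {s'. (s, s') \<in> reach R X \<and> (s', s) \<in> reach R X}"

definition classes :: "('a \<Rightarrow> ('s \<times> 's) set) \<Rightarrow> 'a set \<Rightarrow> 's set \<Rightarrow> 's set set" where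
  "classes R X S' = cls R X ` S'"

definition cstep :: "'s set \<Rightarrow> ('a \<Rightarrow> ('s \<times> 's) set) \<Rightarrow> 'a set \<Rightarrow> 'a set \<Rightarrow> ('s set \<times> 's set) set" where
  "cstep S R X Y = {(c, c'). c \<in> classes R X S \<and> c' \<in> classes R X S \<and>
      (\<exists>s\<in>c. \<exists>s'\<in>c'. (s, s') \<in> steps R Y)}"

definition tildePsi :: "'s set \<Rightarrow> ('a \<Rightarrow> ('s \<times> 's) set) \<Rightarrow> 'a set \<Rightarrow> 'a set \<Rightarrow> 's set \<Rightarrow> 's set set" where
  "tildePsi S R X Y S'' = {e \<in> classes R X S''.
      {e'. (e, e') \<in> (cstep S R X Y)\<^sup>*} \<subseteq> classes R X S'' \<and>
      (\<forall>e'\<in>classes R X S. (e, e') \<in> (cstep S R X Y)\<^sup>* \<longrightarrow> (e', e) \<in> (cstep S R X Y)\<^sup>*)}"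

definition Flatten :: "'s set set \<Rightarrow> 's set" where
  "Flatten E = (\<Union>e\<in>E. e)"

definition comp :: "'s set \<Rightarrow> ('a \<Rightarrow> ('s \<times> 's) set) \<Rightarrow> 'a set \<Rightarrow> 'a set \<Rightarrow> 's set \<Rightarrow> 's set" where
  "comp S R X Y S'' = Flatten (tildePsi S R X Y (Psi S R X S''))"

end

theory Submission
  imports Defs
begin

lemma reach_refl[simp]: "(s, s) \<in> reach R X"
  by (simp add: reach_def)

lemma reach_trans: "(a, b) \<in> reach R X \<Longrightarrow> (b, c) \<in> reach R X \<Longrightarrow> (a, c) \<in> reach R X"
  unfolding reach_def by (rule rtrancl_trans)

lemma steps_reach: "(a, b) \<in> steps R X \<Longrightarrow> (a, b) \<in> reach R X"
  unfolding reach_def by blast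

lemma reach_step: "(a, b) \<in> reach R X \<Longrightarrow> (b, c) \<in> steps R X \<Longrightarrow> (a, c) \<in> reach R X"
  unfolding reach_def by (rule rtrancl_into_rtrancl)

lemma steps_Un: "steps R (X \<union> Y) = steps R X \<union> steps R Y"
  unfolding steps_def by auto

lemma steps_mono: "X \<subseteq> Z \<Longrightarrow> steps R X \<subseteq> steps R Z"
  unfolding steps_def by auto

lemma reach_mono: "X \<subseteq> Z \<Longrightarrow> (a, b) \<in> reach R X \<Longrightarrow> (a, b) \<in> reach R Z"
  unfolding reach_def using rtrancl_mono[OF steps_mono] by blast

lemma reach_induct[consumes 1, case_names refl step]:
  assumes "(a, b) \<in> reach R X" "P a"
    "\<And>y z. (a, y) \<in> reach R X \<Longrightarrow> (y, z) \<in> steps R X \<Longrightarrow> P y \<Longrightarrow> P z"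
  shows "P b"
  using assms(1) unfolding reach_def
proof (induction rule: rtrancl_induct)
  case base then show ?case using assms(2) by simp
next
  case (step y z) then show ?case using assms(3) unfolding reach_def by blast
qed

lemma reach_closed:
  assumes "\<forall>a\<in>X. R a \<subseteq> S \<times> S" "(s, t) \<in> reach R X" "s \<in> S"
  shows "t \<in> S"
  using assms(2) 
proof (induction rule: reach_induct)
  case refl then show ?case using assms(3) .
next
  case (step y z) then show ?case using assms(1) unfolding steps_def by blast
qed

lemma terminal_exists:
  assumes "finite S" "\<forall>a\<in>X. R a \<subseteq> S \<times> S" "s \<in> S"
  shows "\<exists>t. (s, t) \<in> reach R X \<and> (\<forall>u\<in>S. (t, u) \<in> reach R X \<longrightarrow> (u, t) \<in> reach R X)"
proof -
  define m where "m t = card {u. (t, u) \<in> reach R X}" for t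
  obtain t where t: "(s, t) \<in> reach R X" and tmin: "\<And>y. (s, y) \<in> reach R X \<Longrightarrow> m t \<le> m y"
    using ex_has_least_nat[of "\<lambda>t. (s, t) \<in> reach R X" s m] by auto
  have tS: "t \<in> S" using reach_closed[OF assms(2) t assms(3)] .
  have fin: "\<And>y. y \<in> S \<Longrightarrow> finite {u. (y, u) \<in> reach R X}"
  proof -
    fix y assume "y \<in> S"
    then have "{u. (y, u) \<in> reach R X} \<subseteq> S" using reach_closed[OF assms(2)] by blast
    then show "finite {u. (y, u) \<in> reach R X}" using assms(1) finite_subset by blast
  qed
  have "\<forall>u\<in>S. (t, u) \<in> reach R X \<longrightarrow> (u, t) \<in> reach R X"
  proof (intro ballI impI, rule ccontr)
    fix u assume uS: "u \<in> S" and tu: "(t, u) \<in> reach R X" and nu: "(u, t) \<notin> reach R X"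
    have sub: "{v. (u, v) \<in> reach R X} \<subset> {v. (t, v) \<in> reach R X}"
      using tu nu reach_trans[OF tu] by auto
    have "m u < m t" unfolding m_def using psubset_card_mono[OF fin[OF tS] sub] .
    moreover have "m t \<le> m u" using tmin reach_trans[OF t tu] by blast
    ultimately show False by simp
  qed
  then show ?thesis using t by blast
qed

lemma cls_self: "s \<in> cls R X s"
  by (simp add: cls_def)

lemma cls_eq:
  assumes "y \<in> cls R X u" shows "cls R X u = cls R X y"
proof -
  have uy: "(u, y) \<in> reach R X" and yu: "(y, u) \<in> reach R X" using assms unfolding cls_def by auto
  show ?thesis
  proof (rule set_eqI, rule iffI)
    fix v assume "v \<in> cls R X u"
    then have "(u, v) \<in> reach R X" "(v, u) \<in> reach R X" unfolding cls_def by auto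
    then show "v \<in> cls R X y" unfolding cls_def using reach_trans[OF yu] reach_trans[OF _ uy] by simp
  next
    fix v assume "v \<in> cls R X y"
    then have "(y, v) \<in> reach R X" "(v, y) \<in> reach R X" unfolding cls_def by auto
    then show "v \<in> cls R X u" unfolding cls_def using reach_trans[OF uy] reach_trans[OF _ yu] by simp
  qed
qed

lemma term_transfer:
  assumes "w \<in> cls R X q" "\<forall>u\<in>S. (q, u) \<in> reach R X \<longrightarrow> (u, q) \<in> reach R X"
  shows "\<forall>u\<in>S. (w, u) \<in> reach R X \<longrightarrow> (u, w) \<in> reach R X"
proof (intro ballI impI)
  fix u assume u: "u \<in> S" "(w, u) \<in> reach R X"
  have qw: "(q, w) \<in> reach R X" and wq: "(w, q) \<in> reach R X" using assms(1) unfolding cls_def by auto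
  have "(q, u) \<in> reach R X" using reach_trans[OF qw u(2)] .
  then have "(u, q) \<in> reach R X" using assms(2) u(1) by auto
  then show "(u, w) \<in> reach R X" using qw by (rule reach_trans)
qed

lemma cls_path:
  assumes "(c, c') \<in> (cstep S R X Y)\<^sup>*" "c = cls R X p" "a \<in> c" "b \<in> c'"
  shows "(a, b) \<in> reach R (X \<union> Y)"
  using assms(1,4)
proof (induction arbitrary: b rule: rtrancl_induct)
  case base
  have "(a, p) \<in> reach R X" "(p, b) \<in> reach R X" using base assms(2,3) unfolding cls_def by auto
  then have "(a, b) \<in> reach R X" by (rule reach_trans)
  then show ?case by (rule reach_mono[of X "X \<union> Y", OF Un_upper1])
next
  case (step d c'')
  from step.hyps(2) obtain x y where x: "x \<in> d" and y: "y \<in> c''" and xy: "(x, y) \<in> steps R Y"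
    and c'': "c'' \<in> classes R X S" unfolding cstep_def by blast
  have ax: "(a, x) \<in> reach R (X \<union> Y)" using step.IH[OF x] .
  obtain w where w: "c'' = cls R X w" using c'' unfolding classes_def by blast
  have "(y, w) \<in> reach R X" "(w, b) \<in> reach R X" using y step.prems w unfolding cls_def by auto
  then have "(y, b) \<in> reach R X" by (rule reach_trans)
  then have yb: "(y, b) \<in> reach R (X \<union> Y)" by (rule reach_mono[of X "X \<union> Y", OF Un_upper1])
  have "(x, y) \<in> steps R (X \<union> Y)" using xy by (simp only: steps_Un) blast
  then have "(x, y) \<in> reach R (X \<union> Y)" by (rule steps_reach)
  then have "(a, y) \<in> reach R (X \<union> Y)" using ax by (rule reach_trans[rotated])
  then show ?case using yb by (rule reach_trans)
qed

lemma path_cls: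
  assumes RS: "\<forall>a\<in>X \<union> Y. R a \<subseteq> S \<times> S" and bS: "b \<in> S"
    and tm: "\<And>w. (b, w) \<in> reach R (X \<union> Y) \<Longrightarrow> (\<forall>u\<in>S. (w, u) \<in> reach R X \<longrightarrow> (u, w) \<in> reach R X)"
    and bc: "(b, c) \<in> reach R (X \<union> Y)"
  shows "(cls R X b, cls R X c) \<in> (cstep S R X Y)\<^sup>*"
  using bc
proof (induction rule: reach_induct)
  case refl then show ?case by simp
next
  case (step y z)
  have yS: "y \<in> S" using reach_closed[OF RS step.hyps(1) bS] .
  have zS: "z \<in> S" using reach_closed[OF RS reach_step[OF step.hyps] bS] .
  have "(y, z) \<in> steps R X \<union> steps R Y" using step.hyps(2) by (simp only: steps_Un)
  then consider "(y, z) \<in> steps R X" | "(y, z) \<in> steps R Y" by blast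
  then show ?case
  proof cases
    case 1
    have T: "\<forall>u\<in>S. (y, u) \<in> reach R X \<longrightarrow> (u, y) \<in> reach R X" using tm[OF step.hyps(1)] .
    have "(y, z) \<in> reach R X \<longrightarrow> (z, y) \<in> reach R X" using T zS by (rule bspec)
    then have "(z, y) \<in> reach R X" using steps_reach[OF 1] by (rule mp)
    then have "z \<in> cls R X y" using steps_reach[OF 1] unfolding cls_def by simp
    then have "cls R X y = cls R X z" by (rule cls_eq)
    then show ?thesis using step.IH by (rule subst)
  next
    case 2
    have "cls R X y \<in> classes R X S" "cls R X z \<in> classes R X S"
      unfolding classes_def by (rule imageI[OF yS], rule imageI[OF zS])
    moreover have "\<exists>s\<in>cls R X y. \<exists>s'\<in>cls R X z. (s, s') \<in> steps R Y"
      using 2 cls_self[of y R X] cls_self[of z R X] by blast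
    ultimately have "(cls R X y, cls R X z) \<in> cstep S R X Y"
      unfolding cstep_def by simp
    then show ?thesis by (rule rtrancl_into_rtrancl[OF step.IH])
  qed
qed

theorem lemma2:
  fixes A :: "'a set" and Sa :: "'a \<Rightarrow> 'v set"
    and R :: "'a \<Rightarrow> (('a \<Rightarrow> 'v) \<times> ('a \<Rightarrow> 'v)) set"
    and Xi Xj :: "'a set" and S' :: "('a \<Rightarrow> 'v) set"
  assumes "finite A"
    and "\<forall>a\<in>A. finite (Sa a) \<and> Sa a \<noteq> {}"
    and "\<forall>a\<in>A. R a \<subseteq> (Pi\<^sub>E A Sa) \<times> (Pi\<^sub>E A Sa)"
    and "\<forall>a\<in>A. R a = {} \<or> (\<forall>s\<in>Pi\<^sub>E A Sa. \<exists>s'. (s, s') \<in> R a)"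
    and "\<forall>a\<in>A. \<forall>s s'. (s, s') \<in> R a \<longrightarrow> s = s' \<or> (\<forall>b\<in>A. b \<noteq> a \<longrightarrow> s b = s' b)"
    and "Xi \<subseteq> A" and "Xj \<subseteq> A" and "Xi \<inter> Xj = {}"
    and "Mrel (Pi\<^sub>E A Sa) R Xi Xj"
    and "S' \<subseteq> Pi\<^sub>E A Sa"
  shows "Psi (Pi\<^sub>E A Sa) R (Xi \<union> Xj) S' =
         comp (Pi\<^sub>E A Sa) R Xi Xj (Omega R (Xi \<union> Xj) S')"
proof -
  define S0 where "S0 = Pi\<^sub>E A Sa"
  define Z where "Z = Xi \<union> Xj"
  define Orb where "Orb = Omega R Z S'"
  define tX where "tX t \<longleftrightarrow> (\<forall>u\<in>S0. (t, u) \<in> reach R Xi \<longrightarrow> (u, t) \<in> reach R Xi)" for t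
  define tZ where "tZ t \<longleftrightarrow> (\<forall>u\<in>S0. (t, u) \<in> reach R Z \<longrightarrow> (u, t) \<in> reach R Z)" for t
  have fin: "finite S0" unfolding S0_def using assms(1,2) by (intro finite_PiE) auto
  have RSZ: "\<forall>a\<in>Z. R a \<subseteq> S0 \<times> S0"
  proof
    fix a assume "a \<in> Z"
    then have "a \<in> A" using assms(6,7) unfolding Z_def by blast
    then show "R a \<subseteq> S0 \<times> S0" using assms(3) unfolding S0_def by (rule bspec[rotated])
  qed
  have RSX: "\<forall>a\<in>Xi. R a \<subseteq> S0 \<times> S0" using RSZ unfolding Z_def by simp
  have XZ: "Xi \<subseteq> Z" "Xj \<subseteq> Z" unfolding Z_def by auto
  have S'S: "S' \<subseteq> S0" using assms(10) unfolding S0_def .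
  have OS: "Orb \<subseteq> S0"
  proof
    fix t assume "t \<in> Orb"
    then obtain s where "s \<in> S'" "(s, t) \<in> reach R Z" unfolding Orb_def Omega_def by blast
    then show "t \<in> S0" using reach_closed[OF RSZ \<open>(s, t) \<in> reach R Z\<close>] S'S by blast
  qed
  have Ocl: "\<And>s t. s \<in> Orb \<Longrightarrow> (s, t) \<in> reach R Z \<Longrightarrow> t \<in> Orb"
  proof -
    fix s t assume "s \<in> Orb" "(s, t) \<in> reach R Z"
    then obtain s0 where "s0 \<in> S'" "(s0, s) \<in> reach R Z" unfolding Orb_def Omega_def by blast
    then show "t \<in> Orb" using reach_trans[OF \<open>(s0, s) \<in> reach R Z\<close> \<open>(s, t) \<in> reach R Z\<close>]
      unfolding Orb_def Omega_def by blast
  qed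
  have OmX: "Omega R Xi Orb = Orb"
  proof
    show "Omega R Xi Orb \<subseteq> Orb"
    proof
      fix t assume "t \<in> Omega R Xi Orb"
      then obtain s where "s \<in> Orb" "(s, t) \<in> reach R Xi" unfolding Omega_def by blast
      then show "t \<in> Orb" using Ocl[OF \<open>s \<in> Orb\<close> reach_mono[OF XZ(1) \<open>(s, t) \<in> reach R Xi\<close>]] by simp
    qed
    show "Orb \<subseteq> Omega R Xi Orb"
    proof
      fix t assume "t \<in> Orb"
      moreover have "(t, t) \<in> reach R Xi" by simp
      ultimately show "t \<in> Omega R Xi Orb" unfolding Omega_def by blast
    qed
  qed
  define P where "P = Psi S0 R Xi Orb"
  have P: "P = {s \<in> Orb. tX s}" unfolding P_def Psi_def OmX tX_def by simp
  have LHS: "Psi S0 R Z S' = {s \<in> Orb. tZ s}" unfolding Psi_def Orb_def tZ_def by simp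
  have RHS: "comp S0 R Xi Xj Orb = Flatten (tildePsi S0 R Xi Xj P)" unfolding comp_def P_def by simp
  have tZ_reach: "\<And>s b. s \<in> S0 \<Longrightarrow> tZ s \<Longrightarrow> (s, b) \<in> reach R Z \<Longrightarrow> tZ b"
  proof -
    fix s b assume sS: "s \<in> S0" and ts: "tZ s" and sb: "(s, b) \<in> reach R Z"
    show "tZ b" unfolding tZ_def
    proof (intro ballI impI)
      fix u assume uS: "u \<in> S0" and bu: "(b, u) \<in> reach R Z"
      have "(s, u) \<in> reach R Z" using reach_trans[OF sb bu] .
      then have "(u, s) \<in> reach R Z" using ts uS unfolding tZ_def by blast
      then show "(u, b) \<in> reach R Z" using sb by (rule reach_trans)
    qed
  qed
  have ZX: "\<And>s. s \<in> Orb \<Longrightarrow> tZ s \<Longrightarrow> tX s"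
  proof -
    fix s assume sO: "s \<in> Orb" and ts: "tZ s"
    have sS: "s \<in> S0" using sO OS by blast
    define T where "T = Psi S0 R Xi (Psi S0 R Z {s})"
    have Tcl: "post R Xj T \<subseteq> T"
      using assms(9) sS unfolding Mrel_def T_def S0_def Z_def Let_def by blast
    obtain t where st: "(s, t) \<in> reach R Xi" and tt: "tX t"
      using terminal_exists[OF fin RSX sS] unfolding tX_def by blast
    have stZ: "(s, t) \<in> reach R Z" using reach_mono[OF XZ(1) st] .
    have tPZ: "t \<in> Psi S0 R Z {s}"
      unfolding Psi_def Omega_def using stZ tZ_reach[OF sS ts stZ] unfolding tZ_def by blast
    have tO: "t \<in> Omega R Xi (Psi S0 R Z {s})" unfolding Omega_def[of R Xi]
      using tPZ reach_refl[of t R Xi] by blast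
    have tT: "t \<in> T" unfolding T_def Psi_def[of S0 R Xi] using tO tt unfolding tX_def by blast
    have ts': "(t, s) \<in> reach R Z" using ts stZ reach_closed[OF RSZ stZ sS] unfolding tZ_def by blast
    have "s \<in> T" using ts'
    proof (induction rule: reach_induct)
      case refl then show ?case using tT .
    next
      case (step y z)
      have "(y, z) \<in> steps R Xi \<union> steps R Xj" using step.hyps(2) unfolding Z_def by (simp only: steps_Un)
      then consider "(y, z) \<in> steps R Xi" | "(y, z) \<in> steps R Xj" by blast
      then show ?case
      proof cases
        case 1
        have yT: "y \<in> T" by fact
        then obtain w where w: "w \<in> Psi S0 R Z {s}" "(w, y) \<in> reach R Xi" and ty: "tX y"
          unfolding T_def Psi_def Omega_def tX_def by blast
        have wz: "(w, z) \<in> reach R Xi" using reach_step[OF w(2) 1] .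
        have "tX z" unfolding tX_def
        proof (intro ballI impI)
          fix v assume vS: "v \<in> S0" and zv: "(z, v) \<in> reach R Xi"
          have "(y, v) \<in> reach R Xi" using reach_trans[OF steps_reach[OF 1] zv] .
          then have "(v, y) \<in> reach R Xi" using ty vS unfolding tX_def by blast
          then show "(v, z) \<in> reach R Xi" using steps_reach[OF 1] by (rule reach_trans)
        qed
        then show ?thesis using w(1) wz unfolding T_def Psi_def Omega_def tX_def by blast
      next
        case 2
        then have "z \<in> post R Xj T" using step.IH unfolding post_def by blast
        then show ?thesis using Tcl by blast
      qed
    qed
    then show "tX s" unfolding T_def Psi_def tX_def by blast
  qed
  have clsS: "\<And>s. s \<in> S0 \<Longrightarrow> cls R Xi s \<subseteq> S0"
    unfolding cls_def using reach_closed[OF RSX] by blast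
  show ?thesis
    unfolding S0_def[symmetric] Z_def[symmetric] Orb_def[symmetric] LHS RHS
  proof
    show "{s \<in> Orb. tZ s} \<subseteq> Flatten (tildePsi S0 R Xi Xj P)"
    proof
      fix s assume "s \<in> {s \<in> Orb. tZ s}"
      then have sO: "s \<in> Orb" and ts: "tZ s" by auto
      have sS: "s \<in> S0" using sO OS by blast
      have inv: "\<exists>b. e' = cls R Xi b \<and> (s, b) \<in> reach R Z"
        if "(cls R Xi s, e') \<in> (cstep S0 R Xi Xj)\<^sup>*" for e'
        using that
      proof (induction rule: rtrancl_induct)
        case base then show ?case by (intro exI[of _ s]) simp
      next
        case (step e' e'')
        then obtain b where b: "e' = cls R Xi b" "(s, b) \<in> reach R Z" by blast
        from step.hyps(2) obtain x y where x: "x \<in> e'" and y: "y \<in> e''" and xy: "(x, y) \<in> steps R Xj"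
          and c'': "e'' \<in> classes R Xi S0" unfolding cstep_def by blast
        obtain u where u: "e'' = cls R Xi u" using c'' unfolding classes_def by blast
        have "(b, x) \<in> reach R Xi" using x b(1) unfolding cls_def by blast
        then have "(b, x) \<in> reach R Z" by (rule reach_mono[OF XZ(1)])
        then have "(s, x) \<in> reach R Z" using b(2) by (rule reach_trans[rotated])
        moreover have "(x, y) \<in> steps R Z" using xy steps_mono[OF XZ(2)] by blast
        ultimately have "(s, y) \<in> reach R Z" by (rule reach_step)
        moreover have "e'' = cls R Xi y" using cls_eq[of y R Xi u] u y by simp
        ultimately show ?case by blast
      qed
      have allX: "\<And>b. (s, b) \<in> reach R Z \<Longrightarrow> b \<in> P"
      proof -
        fix b assume sb: "(s, b) \<in> reach R Z"
        have "b \<in> Orb" using Ocl[OF sO sb] .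
        moreover have "tZ b" using tZ_reach[OF sS ts sb] .
        ultimately show "b \<in> P" unfolding P using ZX by blast
      qed
      have e_in: "cls R Xi s \<in> tildePsi S0 R Xi Xj P"
        unfolding tildePsi_def
      proof (intro CollectI conjI ballI impI subsetI)
        show "cls R Xi s \<in> classes R Xi P" unfolding classes_def by (rule imageI[OF allX[OF reach_refl]])
      next
        fix e' assume "e' \<in> {e'. (cls R Xi s, e') \<in> (cstep S0 R Xi Xj)\<^sup>*}"
        then obtain b where eb: "e' = cls R Xi b" and sb: "(s, b) \<in> reach R Z" using inv by blast
        show "e' \<in> classes R Xi P" unfolding classes_def eb by (rule imageI[OF allX[OF sb]])
      next
        fix e' assume "e' \<in> classes R Xi S0" "(cls R Xi s, e') \<in> (cstep S0 R Xi Xj)\<^sup>*"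
        then obtain b where b: "e' = cls R Xi b" "(s, b) \<in> reach R Z" using inv by blast
        have bS: "b \<in> S0" using reach_closed[OF RSZ b(2) sS] .
        have "(s, b) \<in> reach R Z \<longrightarrow> (b, s) \<in> reach R Z" using ts bS unfolding tZ_def by (rule bspec)
        then have bs: "(b, s) \<in> reach R Z" using b(2) by (rule mp)
        have "(cls R Xi b, cls R Xi s) \<in> (cstep S0 R Xi Xj)\<^sup>*"
        proof (rule path_cls)
          show "\<forall>a\<in>Xi \<union> Xj. R a \<subseteq> S0 \<times> S0" using RSZ unfolding Z_def .
          show "b \<in> S0" by fact
          show "(b, s) \<in> reach R (Xi \<union> Xj)" using bs unfolding Z_def .
          fix w assume "(b, w) \<in> reach R (Xi \<union> Xj)"
          then have "(s, w) \<in> reach R Z" using b(2) unfolding Z_def by (rule reach_trans[rotated])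
          then have "w \<in> P" by (rule allX)
          then have "tX w" unfolding P by simp
          then show "\<forall>u\<in>S0. (w, u) \<in> reach R Xi \<longrightarrow> (u, w) \<in> reach R Xi"
            unfolding tX_def .
        qed
        then show "(e', cls R Xi s) \<in> (cstep S0 R Xi Xj)\<^sup>*" using b(1) by simp
      qed
      then show "s \<in> Flatten (tildePsi S0 R Xi Xj P)"
        unfolding Flatten_def using cls_self[of s R Xi] by (rule UN_I)
    qed
  next
    show "Flatten (tildePsi S0 R Xi Xj P) \<subseteq> {s \<in> Orb. tZ s}"
    proof
      fix s assume "s \<in> Flatten (tildePsi S0 R Xi Xj P)"
      then obtain e where se: "s \<in> e" and e: "e \<in> tildePsi S0 R Xi Xj P"
        unfolding Flatten_def by blast
      from e have ec: "e \<in> classes R Xi P"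
        and ecl: "{e'. (e, e') \<in> (cstep S0 R Xi Xj)\<^sup>*} \<subseteq> classes R Xi P"
        and eterm: "\<forall>e'\<in>classes R Xi S0. (e, e') \<in> (cstep S0 R Xi Xj)\<^sup>* \<longrightarrow> (e', e) \<in> (cstep S0 R Xi Xj)\<^sup>*"
        unfolding tildePsi_def by simp_all
      from ec obtain p where p: "p \<in> P" "e = cls R Xi p" unfolding classes_def by (rule imageE) simp
      have pO: "p \<in> Orb" using p(1) P by blast
      have pS: "p \<in> S0" using pO OS by blast
      have ps: "(p, s) \<in> reach R Xi" using se p(2) unfolding cls_def by blast
      have sO: "s \<in> Orb" using Ocl[OF pO reach_mono[OF XZ(1) ps]] .
      have sS: "s \<in> S0" using sO OS by blast
      have es: "e = cls R Xi s" using cls_eq[of s R Xi p] se p(2) by simp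
      have inv: "(e, cls R Xi w) \<in> (cstep S0 R Xi Xj)\<^sup>*" if "(s, w) \<in> reach R Z" for w
        using that
      proof (induction rule: reach_induct)
        case refl then show ?case using es by simp
      next
        case (step y z)
        have yS: "y \<in> S0" using reach_closed[OF RSZ step.hyps(1) sS] .
        have zS: "z \<in> S0" using reach_closed[OF RSZ reach_step[OF step.hyps] sS] .
        have "cls R Xi y \<in> classes R Xi P" using ecl step.IH by blast
        then obtain q where q: "q \<in> P" "cls R Xi y = cls R Xi q" unfolding classes_def by blast
        have "tX q" using q(1) P by blast
        have "y \<in> cls R Xi q" using cls_self[of y R Xi] q(2) by simp
        then have ty: "tX y" using term_transfer[of y R Xi q S0] \<open>tX q\<close> unfolding tX_def by simp
        have "(y, z) \<in> steps R Xi \<union> steps R Xj" using step.hyps(2) unfolding Z_def by (simp only: steps_Un)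
        then consider "(y, z) \<in> steps R Xi" | "(y, z) \<in> steps R Xj" by blast
        then show ?case
        proof cases
          case 1
          have "(y, z) \<in> reach R Xi \<longrightarrow> (z, y) \<in> reach R Xi" using ty zS unfolding tX_def by (rule bspec)
          then have "(z, y) \<in> reach R Xi" using steps_reach[OF 1] by (rule mp)
          then have "z \<in> cls R Xi y" using steps_reach[OF 1] unfolding cls_def by simp
          then have "cls R Xi y = cls R Xi z" by (rule cls_eq)
          then show ?thesis using step.IH by (rule subst)
        next
          case 2
          have "cls R Xi y \<in> classes R Xi S0" "cls R Xi z \<in> classes R Xi S0"
            unfolding classes_def by (rule imageI[OF yS], rule imageI[OF zS])
          moreover have "\<exists>s\<in>cls R Xi y. \<exists>s'\<in>cls R Xi z. (s, s') \<in> steps R Xj"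
            using 2 cls_self[of y R Xi] cls_self[of z R Xi] by blast
          ultimately have "(cls R Xi y, cls R Xi z) \<in> cstep S0 R Xi Xj"
            unfolding cstep_def by simp
          then show ?thesis by (rule rtrancl_into_rtrancl[OF step.IH])
        qed
      qed
      have "tZ s" unfolding tZ_def
      proof (intro ballI impI)
        fix u assume uS: "u \<in> S0" and su: "(s, u) \<in> reach R Z"
        have "(e, cls R Xi u) \<in> (cstep S0 R Xi Xj)\<^sup>*" using inv[OF su] .
        moreover have "cls R Xi u \<in> classes R Xi S0" unfolding classes_def by (rule imageI[OF uS])
        ultimately have "(cls R Xi u, e) \<in> (cstep S0 R Xi Xj)\<^sup>*" using eterm by blast
        then show "(u, s) \<in> reach R Z"
          using cls_path[of "cls R Xi u" e S0 R Xi Xj u u s] cls_self[of u R Xi] se unfolding Z_def by simp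
      qed
      then show "s \<in> {s \<in> Orb. tZ s}" using sO by blast
    qed
  qed
qed

end
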